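(* Let $N\ge1$. The entries of the matrices $\mathbf D$ and $\mathbf D^\dagger$ satisfy $$D_{ij}=-D^\dagger_{N+1-i,\,N+1-j},\qquad 1\le i\le N,\ 1\le j\le N.$$ Equivalently, $\mathbf D_{1:N}=-\mathbf J\mathbf D^\dagger_{1:N}\mathbf J$, where $\mathbf J$ is the $N\times N$ exchange matrix with ones on its counterdiagonal and zeros elsewhere.
   Context: $-1<\tau_1<\dots<\tau_N<1$ are the $N$ Gauss quadrature abscissas (roots of the degree-$N$ Legendre polynomial), $\omega_1,\dots,\omega_N$ the Gauss quadrature weights, $\tau_0=-1$, $\tau_{N+1}=1$. For $1\le i\le N$, $0\le j\le N$, $D_{ij}=\dot L_j(\tau_i)$ with $L_j(\tau)=\prod_{k=0,k\ne j}^N\frac{\tau-\tau_k}{\tau_j-\tau_k}$. For $1\le i,j\le N$, $D^\dagger_{ij}=-(\omega_j/\omega_i)D_{ji}$, and $D^\dagger_{i,N+1}=-\sum_{j=1}^ND^\dagger_{ij}$. $\mathbf D_{1:N}=(D_{ij})_{1\le i,j\le N}$ and $\mathbf D^\dagger_{1:N}=(D^\dagger_{ij})_{1\le i,j\le N}$. *)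

theory Defs
  imports "HOL-Analysis.Analysis" "HOL-Computational_Algebra.Polynomial"
begin

fun legendre :: "nat \<Rightarrow> real poly" where
  "legendre 0 = 1"
| "legendre (Suc 0) = [:0, 1:]"
| "legendre (Suc (Suc n)) =
     smult (1 / real (n + 2))
       (smult (real (2 * n + 3)) ([:0, 1:] * legendre (Suc n)) - smult (real (n + 1)) (legendre n))"

definition gauss_tau :: "nat \<Rightarrow> nat \<Rightarrow> real" where
  "gauss_tau N i =
     (if i = 0 then -1
      else if i = N + 1 then 1
      else sorted_list_of_set {x. poly (legendre N) x = 0} ! (i - 1))"

definition gauss_weight :: "nat \<Rightarrow> nat \<Rightarrow> real" where
  "gauss_weight N i =
     integral {-1..1}
       (\<lambda>t. \<Prod>k\<in>{1..N} - {i}. (t - gauss_tau N k) / (gauss_tau N i - gauss_tau N k))"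

definition lagr :: "nat \<Rightarrow> nat \<Rightarrow> real \<Rightarrow> real" where
  "lagr N j t = (\<Prod>k\<in>{0..N} - {j}. (t - gauss_tau N k) / (gauss_tau N j - gauss_tau N k))"

definition Dmat :: "nat \<Rightarrow> nat \<Rightarrow> nat \<Rightarrow> real" where
  "Dmat N i j = deriv (lagr N j) (gauss_tau N i)"

definition Ddag :: "nat \<Rightarrow> nat \<Rightarrow> nat \<Rightarrow> real" where
  "Ddag N i j = - (gauss_weight N j / gauss_weight N i) * Dmat N j i"

end

theory Submission
  imports Defs "HOL-Computational_Algebra.Fundamental_Theorem_Algebra"
begin


abbreviation "PX \<equiv> [:0, 1:] :: real poly"
definition PA :: "real poly" where "PA = [:1, 0, -1:]"

lemma leg_rec_pt: "(real n + 2) * poly (legendre (Suc (Suc n))) x =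
   (2 * n + 3) * x * poly (legendre (Suc n)) x - (n + 1) * poly (legendre n) x"
proof -
  have nz: "real n + 2 \<noteq> 0" by linarith
  have e: "poly (legendre (Suc (Suc n))) x = (1 / real (n + 2)) * ((2 * n + 3) * x * poly (legendre (Suc n)) x - (n + 1) * poly (legendre n) x)"
    by (simp add: mult.assoc)
  have nz2: "2 + real n \<noteq> 0" by linarith
  show ?thesis unfolding e using nz nz2 by (simp add: field_simps)
qed

lemma leg_rec: "smult (real n + 2) (legendre (Suc (Suc n))) =
   smult (real (2 * n + 3)) (PX * legendre (Suc n)) - smult (real (n + 1)) (legendre n)"
  by (rule poly_eq_poly_eq_iff[THEN iffD1]) (auto simp: leg_rec_pt algebra_simps)

lemma leg_deg: "degree (legendre n) \<le> n \<and> coeff (legendre n) n > 0"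
proof (induction n rule: legendre.induct)
  case 1 then show ?case by simp
next
  case 2 then show ?case by simp
next
  case (3 n)
  have h1: "degree (legendre (Suc n)) \<le> Suc n" "coeff (legendre (Suc n)) (Suc n) > 0"
    "degree (legendre n) \<le> n" using 3 by auto
  have "PX * legendre (Suc n) = pCons 0 (legendre (Suc n))" by simp
  then have d1: "degree (PX * legendre (Suc n)) \<le> Suc (Suc n)"
    using h1 degree_pCons_le[of 0 "legendre (Suc n)"] by simp
  have "degree (smult (real (2*n+3)) (PX * legendre (Suc n)) - smult (real(n+1)) (legendre n)) \<le> Suc (Suc n)"
    by (rule degree_diff_le) (use d1 h1 in \<open>auto intro: order.trans[OF degree_smult_le]\<close>)
  then have d: "degree (legendre (Suc (Suc n))) \<le> Suc (Suc n)"
    by (auto intro: order.trans[OF degree_smult_le])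
  have c0: "coeff (legendre n) (Suc (Suc n)) = 0" using h1 by (simp add: coeff_eq_0)
  have "coeff (legendre (Suc (Suc n))) (Suc (Suc n)) = (2*n+3) * coeff (legendre (Suc n)) (Suc n) / (n+2)"
    using c0 by simp
  then show ?case using d h1 by simp
qed

lemma leg_degree: "degree (legendre n) = n"
  using leg_deg[of n] le_degree[of "legendre n" n] by auto

lemma leg_nz: "legendre n \<noteq> 0"
  using leg_deg[of n] by auto

lemma leg_parity: "poly (legendre n) (-x) = (-1)^n * poly (legendre n) x"
  by (induction n rule: legendre.induct) (auto simp: algebra_simps)

lemma leg_BD: "\<forall>x. x * poly (pderiv (legendre (Suc n))) x - poly (pderiv (legendre n)) x = real (Suc n) * poly (legendre (Suc n)) x
   \<and> (1 - x^2) * poly (pderiv (legendre (Suc n))) x = real (Suc n) * (poly (legendre n) x - x * poly (legendre (Suc n)) x)"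
proof (induction n)
  case 0 then show ?case by (simp add: pderiv_pCons power2_eq_square algebra_simps)
next
  case (Suc m)
  define P0 where "P0 = legendre m"
  define P1 where "P1 = legendre (Suc m)"
  define P2 where "P2 = legendre (Suc (Suc m))"
  have R: "smult (real m + 2) P2 = smult (real (2 * m + 3)) (PX * P1) - smult (real (m + 1)) P0"
    unfolding P0_def P1_def P2_def by (rule leg_rec)
  have dR: "smult (real m + 2) (pderiv P2) = smult (real (2 * m + 3)) (P1 + PX * pderiv P1) - smult (real (m + 1)) (pderiv P0)"
    using arg_cong[OF R, of pderiv] by (simp add: pderiv_smult pderiv_diff pderiv_mult pderiv_pCons smult_add_right)
  show ?case unfolding P1_def[symmetric] P2_def[symmetric]
  proof
    fix x
    have B: "x * poly (pderiv P1) x - poly (pderiv P0) x = real (Suc m) * poly P1 x" and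
      D: "(1 - x^2) * poly (pderiv P1) x = real (Suc m) * (poly P0 x - x * poly P1 x)"
      using Suc unfolding P0_def P1_def by auto
    have Rp: "(real m + 2) * poly P2 x = (2 * m + 3) * x * poly P1 x - (m + 1) * poly P0 x"
      unfolding P0_def P1_def P2_def using leg_rec_pt[of m x] by simp
    have dRp: "(real m + 2) * poly (pderiv P2) x = (2 * m + 3) * (poly P1 x + x * poly (pderiv P1) x) - (m + 1) * poly (pderiv P0) x"
      using arg_cong[OF dR, of "\<lambda>p. poly p x"] by (simp add: algebra_simps)
    have "(real m + 2) * poly (pderiv P2) x = (real m + 2) * (x * poly (pderiv P1) x + (real m + 2) * poly P1 x)"
    proof -
      have xd1: "x * poly (pderiv P1) x = poly (pderiv P0) x + (real m + 1) * poly P1 x"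
        using B by (simp add: algebra_simps)
      have "(real m + 2) * poly (pderiv P2) x = (2 * m + 3) * (poly P1 x + (poly (pderiv P0) x + (real m + 1) * poly P1 x)) - (m + 1) * poly (pderiv P0) x"
        using dRp unfolding xd1 by simp
      then show ?thesis unfolding xd1 by (simp add: algebra_simps)
    qed
    then have C: "poly (pderiv P2) x = x * poly (pderiv P1) x + (real m + 2) * poly P1 x"
      by (metis mult_cancel_left add_nonneg_pos of_nat_0_le_iff zero_less_numeral less_irrefl)
    show "x * poly (pderiv P2) x - poly (pderiv P1) x = real (Suc (Suc m)) * poly P2 x
      \<and> (1 - x^2) * poly (pderiv P2) x = real (Suc (Suc m)) * (poly P1 x - x * poly P2 x)"
    proof
      show "x * poly (pderiv P2) x - poly (pderiv P1) x = real (Suc (Suc m)) * poly P2 x"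
        unfolding C using D Rp by (simp add: algebra_simps power2_eq_square)
      show "(1 - x^2) * poly (pderiv P2) x = real (Suc (Suc m)) * (poly P1 x - x * poly P2 x)"
      proof -
        have "(1 - x^2) * poly (pderiv P2) x = x * ((1 - x^2) * poly (pderiv P1) x) + (real m + 2) * (1 - x^2) * poly P1 x"
          unfolding C by (simp add: algebra_simps)
        also have "\<dots> = real (Suc (Suc m)) * (poly P1 x - x * poly P2 x)"
        proof -
          have Rx: "x * ((real m + 2) * poly P2 x) = x * ((2 * m + 3) * x * poly P1 x - (m + 1) * poly P0 x)"
            using Rp by simp
          show ?thesis unfolding D using Rx by (simp add: algebra_simps power2_eq_square)
        qed
        finally show ?thesis .
      qed
    qed
  qed
qed

lemma leg_ode: "pderiv (PA * pderiv (legendre n)) = smult (- (real n * (real n + 1))) (legendre n)"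
proof (cases n)
  case 0 then show ?thesis by simp
next
  case (Suc m)
  have D: "PA * pderiv (legendre (Suc m)) = smult (real (Suc m)) (legendre m - PX * legendre (Suc m))"
    by (rule poly_eq_poly_eq_iff[THEN iffD1], rule ext)
       (use leg_BD[of m] in \<open>auto simp: algebra_simps power2_eq_square PA_def\<close>)
  have "pderiv (PA * pderiv (legendre (Suc m))) = smult (real (Suc m)) (pderiv (legendre m) - legendre (Suc m) - PX * pderiv (legendre (Suc m)))"
    unfolding D by (simp add: pderiv_smult pderiv_diff pderiv_mult pderiv_pCons algebra_simps)
  also have "\<dots> = smult (- (real (Suc m) * (real (Suc m) + 1))) (legendre (Suc m))"
    by (rule poly_eq_poly_eq_iff[THEN iffD1], rule ext)
       (use leg_BD[of m] in \<open>auto simp: algebra_simps\<close>)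
  finally show ?thesis using Suc by simp
qed

definition I :: "real poly \<Rightarrow> real" where "I p = integral {-1..1} (poly p)"

lemma poly_integrable[simp]: "(poly p) integrable_on {a..b::real}"
  by (rule integrable_continuous_interval) (auto intro: continuous_intros)

lemma I_add: "I (p + q) = I p + I q"
proof -
  have e: "poly (p + q) = (\<lambda>x. poly p x + poly q x)" by auto
  show ?thesis unfolding I_def e
    by (rule Henstock_Kurzweil_Integration.integral_add) simp_all
qed

lemma I_diff: "I (p - q) = I p - I q"
proof -
  have e: "poly (p - q) = (\<lambda>x. poly p x - poly q x)" by auto
  show ?thesis unfolding I_def e
    by (rule Henstock_Kurzweil_Integration.integral_diff) simp_all
qed

lemma I_smult: "I (smult c p) = c * I p"
proof -
  have e: "poly (smult c p) = (\<lambda>x. c * poly p x)" by auto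
  show ?thesis unfolding I_def e by simp
qed

lemma I_minus: "I (- p) = - I p"
proof -
  have e: "poly (- p) = (\<lambda>x. - poly p x)" by auto
  show ?thesis unfolding I_def e by simp
qed

lemma I_zero: "I 0 = 0"
proof -
  have e: "poly 0 = (\<lambda>x::real. 0)" by auto
  show ?thesis unfolding I_def e by simp
qed

lemma I_sum: "finite A \<Longrightarrow> I (\<Sum>a\<in>A. f a) = (\<Sum>a\<in>A. I (f a))"
  by (induction A rule: finite_induct) (auto simp: I_add I_zero)

lemma I_pderiv: "I (pderiv f) = poly f 1 - poly f (-1)"
proof -
  have "((poly (pderiv f)) has_integral (poly f 1 - poly f (-1))) {-1..1}"
    by (rule fundamental_theorem_of_calculus)
       (auto simp: has_real_derivative_iff_has_vector_derivative[symmetric] intro: has_field_derivative_at_within)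
  then show ?thesis unfolding I_def by (rule integral_unique)
qed

lemma PA_pm1: "poly PA 1 = 0" "poly PA (-1) = 0" by (simp_all add: PA_def)

lemma I_symA:
  assumes "poly A 1 = 0" "poly A (-1) = 0"
  shows "I (pderiv (A * pderiv p) * q) = I (pderiv (A * pderiv q) * p)"
proof -
  have "I (pderiv (A * pderiv p * q - A * pderiv q * p)) = 0"
    unfolding I_pderiv using assms by simp
  moreover have "pderiv (A * pderiv p * q - A * pderiv q * p) = pderiv (A * pderiv p) * q - pderiv (A * pderiv q) * p"
    by (simp add: pderiv_mult pderiv_diff algebra_simps)
  ultimately show ?thesis by (simp add: I_diff)
qed

lemmas I_sym = I_symA[OF PA_pm1]

lemma L_monom: "pderiv (PA * pderiv (monom 1 k)) = smult (real k * (real k - 1)) (monom 1 (k - 2)) - smult (real k * (real k + 1)) (monom 1 k)"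
proof (cases k)
  case 0 then show ?thesis by (simp add: pderiv_monom)
next
  case (Suc j)
  have h: "PA * pderiv (monom 1 k) = smult (real k) (monom 1 j - monom 1 (j + 2))"
    by (rule poly_eq_poly_eq_iff[THEN iffD1], rule ext)
       (auto simp: Suc pderiv_monom poly_monom algebra_simps power2_eq_square PA_def)
  show ?thesis
    apply (subst h)
    apply (simp only: pderiv_smult pderiv_diff pderiv_monom smult_diff_right smult_monom)
    apply (simp add: Suc algebra_simps)
    done
qed

lemma leg_orth_monom: "k < n \<Longrightarrow> I (legendre n * monom 1 k) = 0"
proof (induction k rule: less_induct)
  case (less k)
  define P where "P = legendre n"
  have e1: "I (pderiv (PA * pderiv (monom 1 k)) * P) = - (real n * (real n + 1)) * I (P * monom 1 k)"
  proof -
    have "I (pderiv (PA * pderiv (monom 1 k)) * P) = I (pderiv (PA * pderiv P) * monom 1 k)" by (rule I_sym)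
    also have "\<dots> = - (real n * (real n + 1)) * I (P * monom 1 k)"
      unfolding P_def leg_ode by (simp add: I_smult I_minus mult_smult_left)
    finally show ?thesis .
  qed
  have "I (pderiv (PA * pderiv (monom 1 k)) * P) = real k * (real k - 1) * I (P * monom 1 (k - 2)) - real k * (real k + 1) * I (P * monom 1 k)"
    unfolding L_monom by (simp add: algebra_simps I_diff I_smult)
  also have "real k * (real k - 1) * I (P * monom 1 (k - 2)) = 0"
  proof (cases "k \<ge> 2")
    case True then have "I (P * monom 1 (k - 2)) = 0" using less P_def by auto
    then show ?thesis by simp
  next
    case False then have "k = 0 \<or> k = 1" by auto
    then show ?thesis by auto
  qed
  finally have "(real n * (real n + 1) - real k * (real k + 1)) * I (P * monom 1 k) = 0"
    using e1 by (simp add: algebra_simps)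
  moreover have "real n * (real n + 1) - real k * (real k + 1) \<noteq> 0"
  proof -
    have "real k < real n" using less by simp
    then have "real k * (real k + 1) < real n * (real n + 1)"
      by (intro mult_strict_mono) auto
    then show ?thesis by simp
  qed
  ultimately show ?case unfolding P_def by simp
qed

lemma leg_orth: "degree q < n \<Longrightarrow> I (legendre n * q) = 0"
proof -
  assume d: "degree q < n"
  have "legendre n * q = (\<Sum>i\<le>degree q. smult (coeff q i) (legendre n * monom 1 i))"
  proof -
    have "legendre n * q = legendre n * (\<Sum>i\<le>degree q. monom (coeff q i) i)"
      by (simp only: poly_as_sum_of_monoms)
    also have "\<dots> = (\<Sum>i\<le>degree q. legendre n * smult (coeff q i) (monom 1 i))"
      by (simp add: sum_distrib_left smult_monom)
    finally show ?thesis by (simp add: mult_smult_right)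
  qed
  then show ?thesis using d by (simp add: I_sum I_smult leg_orth_monom)
qed




abbreviation cp :: "real poly \<Rightarrow> complex poly" where "cp \<equiv> map_poly complex_of_real"

lemma cp_coeff: "coeff (cp p) n = of_real (coeff p n)"
  by (simp add: coeff_map_poly)

lemma cp_add: "cp (p + q) = cp p + cp q"
  by (rule poly_eqI) (simp add: cp_coeff)

lemma cp_minus: "cp (- p) = - cp p"
  by (rule poly_eqI) (simp add: cp_coeff)

lemma cp_diff: "cp (p - q) = cp p - cp q"
  by (rule poly_eqI) (simp add: cp_coeff)

lemma cp_pCons: "cp (pCons a p) = pCons (of_real a) (cp p)"
  by (simp add: map_poly_pCons)

lemma cp_smult: "cp (smult a p) = smult (of_real a) (cp p)"
  by (rule poly_eqI) (simp add: cp_coeff)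

lemma cp_mult: "cp (p * q) = cp p * cp q"
  by (induction p) (auto simp: cp_add cp_smult cp_pCons)

lemma cp_one: "cp 1 = 1" by simp

lemma cp_power: "cp (p ^ n) = cp p ^ n"
  by (induction n) (auto simp: cp_mult)

lemma cp_prod: "cp (\<Prod>i\<in>A. f i) = (\<Prod>i\<in>A. cp (f i))"
  by (induction A rule: infinite_finite_induct) (auto simp: cp_mult)

lemma cp_inj: "cp p = cp q \<Longrightarrow> p = q"
  by (rule poly_eqI) (metis cp_coeff of_real_eq_iff)

lemma cp_degree: "degree (cp p) = degree p"
  by (rule degree_map_poly) simp

lemma cp_eq0: "cp p = 0 \<longleftrightarrow> p = 0"
  using cp_inj[of p 0] by auto

lemma poly_cp_real: "poly (cp p) (of_real x) = of_real (poly p x)"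
  by (induction p) (auto simp: cp_pCons)

lemma cp_dvd:
  assumes "a \<noteq> 0" "cp a dvd cp b"
  shows "a dvd b"
proof -
  have e: "cp b = cp (b div a) * cp a + cp (b mod a)"
    by (metis cp_add cp_mult div_mult_mod_eq)
  have "cp a dvd cp (b mod a)"
    using assms(2) e by (metis dvd_add_right_iff dvd_triv_right)
  moreover have "b mod a = 0 \<or> degree (b mod a) < degree a" by (rule degree_mod_less[OF assms(1)])
  moreover have "b mod a = 0"
  proof (rule ccontr)
    assume nz: "b mod a \<noteq> 0"
    then have "degree (cp a) \<le> degree (cp (b mod a))"
      using dvd_imp_degree_le[of "cp a" "cp (b mod a)"] \<open>cp a dvd cp (b mod a)\<close> cp_eq0 by blast
    then show False using degree_mod_less'[OF assms(1) nz] by (simp add: cp_degree)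
  qed
  then show ?thesis by (simp add: mod_eq_0_iff_dvd)
qed

lemma I_pos:
  assumes "\<And>x. x \<in> {-1..1} \<Longrightarrow> poly c x \<ge> 0" "c \<noteq> 0" "g \<noteq> 0"
  shows "I (c * g * g) \<noteq> 0"
proof
  assume I0: "I (c * g * g) = 0"
  have "\<forall>x \<in> cbox (-1) (1::real). poly (c * g * g) x = 0"
  proof (subst integral_cbox_eq_0_iff[symmetric])
    show "continuous_on (cbox (- 1) 1) (poly (c * g * g))" using continuous_on_poly[OF continuous_on_id, of _ "c*g*g"] by simp
    show "box (- 1) (1::real) \<noteq> {}" by simp
    show "\<And>x. x \<in> cbox (- 1) 1 \<Longrightarrow> 0 \<le> poly (c * g * g) x"
    proof -
      fix x :: real assume "x \<in> cbox (- 1) 1"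
      then have "poly c x \<ge> 0" using assms(1) by auto
      then show "0 \<le> poly (c * g * g) x" by (simp add: mult.assoc)
    qed
    show "integral (cbox (- 1) 1) (poly (c * g * g)) = 0" using I0 unfolding I_def by simp
  qed
  then have "{-1..1} \<subseteq> {x. poly (c * g * g) x = 0}" by auto
  moreover have "finite {x. poly (c * g * g) x = 0}"
    by (rule poly_roots_finite) (use assms in auto)
  ultimately have "finite {-1..(1::real)}" by (rule finite_subset)
  then show False using infinite_Icc[of "-1::real" 1] by simp
qed

lemma I_neg:
  assumes "\<And>x. x \<in> {-1..1} \<Longrightarrow> poly c x \<le> 0" "c \<noteq> 0" "g \<noteq> 0"
  shows "I (c * g * g) \<noteq> 0"
proof -
  have "I ((- c) * g * g) \<noteq> 0" by (rule I_pos) (use assms in auto)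
  then show ?thesis by (simp add: I_minus)
qed




context fixes N :: nat assumes N1: "N \<ge> 1" begin

lemma no_factor:
  assumes "c dvd legendre N" "degree c \<ge> 1"
    "(\<forall>x\<in>{-1..1}. poly c x \<ge> 0) \<or> (\<forall>x\<in>{-1..1}. poly c x \<le> 0)"
  shows False
proof -
  obtain g where g: "legendre N = c * g" using assms(1) by (auto elim: dvdE)
  have cg: "c \<noteq> 0" "g \<noteq> 0" using g leg_nz[of N] by auto
  have "degree (legendre N) = degree c + degree g" using g cg by (simp add: degree_mult_eq)
  then have "degree g < N" using assms(2) leg_degree[of N] by simp
  then have "I (legendre N * g) = 0" by (rule leg_orth)
  then have "I (c * g * g) = 0" using g by (simp add: mult.assoc)
  moreover have "I (c * g * g) \<noteq> 0" using assms(3) I_pos[of c g] I_neg[of c g] cg by auto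
  ultimately show False by simp
qed

lemma root_in: "poly (legendre N) r = 0 \<Longrightarrow> -1 < r \<and> r < 1"
proof (rule ccontr)
  assume r: "poly (legendre N) r = 0" and nr: "\<not> (-1 < r \<and> r < 1)"
  have "[:-r,1:] dvd legendre N" using r by (simp add: poly_eq_0_iff_dvd)
  moreover have "(\<forall>x\<in>{-1..1}. poly [:-r,1:] x \<ge> 0) \<or> (\<forall>x\<in>{-1..1}. poly [:-r,1:] x \<le> (0::real))"
    using nr by auto
  ultimately show False using no_factor[of "[:-r,1:]"] by auto
qed

lemma roots_structure: "\<exists>r. inj_on r {..<N} \<and> {x. poly (legendre N) x = 0} = r ` {..<N}"
proof -
  define p where "p = cp (legendre N)"
  have dp: "degree p = N" by (simp add: p_def cp_degree leg_degree)
  obtain root where rt: "smult (lead_coeff p) (\<Prod>i<degree p. [:-root i, 1:]) = p"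
    by (rule complex_poly_decompose')
  have lc: "lead_coeff p \<noteq> 0" using leg_nz[of N] cp_eq0 p_def by auto
  have F1: "poly p w = 0 \<longleftrightarrow> (\<exists>i<N. w = root i)" for w
  proof -
    have "poly p w = lead_coeff p * (\<Prod>i<N. w - root i)"
      by (subst rt[symmetric]) (simp add: poly_prod dp)
    then show ?thesis using lc by auto
  qed
  have F2: "[:-root a,1:] * [:-root b,1:] dvd p" if "a<N" "b<N" "a\<noteq>b" for a b
  proof -
    have "(\<Prod>i<N. [:-root i,1:]) = [:-root a,1:] * (\<Prod>i\<in>{..<N}-{a}. [:-root i,1:])"
      using that by (intro prod.remove) auto
    also have "(\<Prod>i\<in>{..<N}-{a}. [:-root i,1:]) = [:-root b,1:] * (\<Prod>i\<in>{..<N}-{a}-{b}. [:-root i,1:])"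
      using that by (intro prod.remove) auto
    finally have "(\<Prod>i<N. [:-root i,1:]) = ([:-root a,1:] * [:-root b,1:]) * (\<Prod>i\<in>{..<N}-{a}-{b}. [:-root i,1:])"
      by (simp only: mult.assoc)
    then have "[:-root a,1:] * [:-root b,1:] dvd (\<Prod>i<N. [:-root i,1:])"
      by (metis dvd_triv_left)
    then have "[:-root a,1:] * [:-root b,1:] dvd smult (lead_coeff p) (\<Prod>i<N. [:-root i,1:])"
      by (rule dvd_smult)
    then show ?thesis using rt dp by simp
  qed
  have F3: "Im (root i) = 0" if "i<N" for i
  proof (rule ccontr)
    assume im: "Im (root i) \<noteq> 0"
    define z where "z = root i"
    have "poly p z = 0" using F1 that z_def by auto
    then have "poly p (cnj z) = 0"
      using real_poly_cnj_root_iff[of p z] by (simp add: p_def cp_coeff)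
    then obtain b where b: "b < N" "cnj z = root b" using F1 by auto
    have bi: "b \<noteq> i" using b im z_def by (auto simp: complex_eq_iff)
    define Q where "Q = [:(Re z)^2 + (Im z)^2, -2*Re z, 1:]"
    have "cp Q = [:-z,1:] * [:-cnj z,1:]"
      by (rule poly_eq_poly_eq_iff[THEN iffD1], rule ext)
         (simp add: complex_eq_iff Q_def cp_pCons power2_eq_square algebra_simps)
    then have "cp Q dvd cp (legendre N)" using F2[OF that b(1) bi[symmetric]] b z_def p_def by simp
    then have "Q dvd legendre N" by (intro cp_dvd) (auto simp: Q_def)
    moreover have "\<forall>x\<in>{-1..1}. poly Q x \<ge> 0"
    proof
      fix x :: real
      have "poly Q x = (x - Re z)^2 + (Im z)^2" by (simp add: Q_def algebra_simps power2_eq_square)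
      then show "poly Q x \<ge> 0" by simp
    qed
    moreover have "degree Q \<ge> 1" by (simp add: Q_def)
    ultimately show False using no_factor by blast
  qed
  define r where "r i = Re (root i)" for i
  have rr: "root i = of_real (r i)" if "i<N" for i using F3[OF that] r_def by (simp add: complex_eq_iff)
  have inj: "inj_on r {..<N}"
  proof (rule inj_onI, rule ccontr)
    fix a b assume ab: "a \<in> {..<N}" "b \<in> {..<N}" "r a = r b" "a \<noteq> b"
    then have "cp ([:-r a,1:]^2) dvd cp (legendre N)" using F2[of a b] rr[of a] rr[of b] p_def
      by (simp add: cp_power cp_pCons power2_eq_square)
    then have "[:-r a,1:]^2 dvd legendre N" by (intro cp_dvd) auto
    then show False using no_factor[of "[:-r a,1:]^2"] by (auto simp: degree_power_eq)
  qed
  have Z: "{x. poly (legendre N) x = 0} = r ` {..<N}"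
  proof -
    have "poly (legendre N) x = 0 \<longleftrightarrow> poly p (of_real x) = 0" for x
      by (simp add: p_def poly_cp_real)
    also have "\<dots> x \<longleftrightarrow> (\<exists>i<N. x = r i)" for x
      using F1 rr by auto
    finally show ?thesis by auto
  qed
  show ?thesis using inj Z by blast
qed

end



context fixes N :: nat assumes N1: "N \<ge> 1" begin

definition "ZZ = {x. poly (legendre N) x = 0}"
definition "ss = sorted_list_of_set ZZ"

lemma ZZ_fin: "finite ZZ" unfolding ZZ_def by (rule poly_roots_finite[OF leg_nz])

lemma ZZ_card: "card ZZ = N"
  using roots_structure[OF N1] unfolding ZZ_def by (metis card_image card_lessThan)

lemma ZZ_in: "x \<in> ZZ \<Longrightarrow> -1 < x \<and> x < 1"
  using root_in[OF N1] unfolding ZZ_def by auto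

lemma ZZ_sym: "x \<in> ZZ \<Longrightarrow> -x \<in> ZZ"
  unfolding ZZ_def by (simp add: leg_parity)

lemma ss_len: "length ss = N" unfolding ss_def using ZZ_card by simp

lemma ss_sorted: "sorted_wrt (<) ss" unfolding ss_def by simp

lemma ss_set: "set ss = ZZ" unfolding ss_def using ZZ_fin by simp

lemma ss_distinct: "distinct ss" unfolding ss_def by simp

lemma ss_rev: "rev (map uminus ss) = ss"
proof -
  have "uminus ` ZZ = ZZ"
  proof
    show "uminus ` ZZ \<subseteq> ZZ" using ZZ_sym by auto
    show "ZZ \<subseteq> uminus ` ZZ"
    proof
      fix x assume "x \<in> ZZ"
      then have "-x \<in> ZZ" by (rule ZZ_sym)
      then show "x \<in> uminus ` ZZ" by (metis image_eqI minus_minus)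
    qed
  qed
  then have "sorted_wrt (<) (rev (map uminus ss)) \<and> set (rev (map uminus ss)) = ZZ \<and> length (rev (map uminus ss)) = card ZZ"
    using ss_sorted ss_set ss_len ZZ_card by (simp add: sorted_wrt_rev sorted_wrt_map)
  then have "sorted_list_of_set ZZ = rev (map uminus ss)"
    using sorted_list_of_set_unique[OF ZZ_fin] by blast
  then show ?thesis unfolding ss_def by simp
qed

lemma ss_sym: "k < N \<Longrightarrow> ss ! (N - 1 - k) = - ss ! k"
proof -
  assume k: "k < N"
  have "ss ! (N - 1 - k) = rev (map uminus ss) ! (N - 1 - k)" using ss_rev by simp
  also have "\<dots> = - ss ! k" using k ss_len by (simp add: rev_nth)
  finally show ?thesis .
qed

abbreviation "tau \<equiv> gauss_tau N"

lemma tau_int: "k \<in> {1..N} \<Longrightarrow> tau k = ss ! (k - 1)"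
  unfolding gauss_tau_def ss_def ZZ_def by auto

lemma tau_0: "tau 0 = -1" unfolding gauss_tau_def by simp
lemma tau_N1: "tau (N + 1) = 1" unfolding gauss_tau_def by simp
lemma tau_N1': "tau (Suc N) = 1" unfolding gauss_tau_def by simp

lemma tau_ZZ: "k \<in> {1..N} \<Longrightarrow> tau k \<in> ZZ"
proof -
  assume k: "k \<in> {1..N}"
  then have "k - 1 < length ss" using ss_len by auto
  then have "ss ! (k - 1) \<in> set ss" by (rule nth_mem)
  then show ?thesis using tau_int[OF k] ss_set by simp
qed

lemma tau_in: "k \<in> {1..N} \<Longrightarrow> -1 < tau k \<and> tau k < 1"
  using tau_ZZ ZZ_in by blast

lemma tau_sym: "k \<in> {0..N+1} \<Longrightarrow> tau (N + 1 - k) = - tau k"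
proof -
  assume k: "k \<in> {0..N+1}"
  have "k = 0 \<or> k = N + 1 \<or> k \<in> {1..N}" using k by auto
  then consider "k = 0" | "k = N + 1" | "k \<in> {1..N}" by blast
  then show ?thesis
  proof cases
    case 1 then show ?thesis by (simp add: tau_0 tau_N1 tau_N1')
  next
    case 2 then show ?thesis by (simp add: tau_0 tau_N1 tau_N1')
  next
    case 3
    have k1: "N + 1 - k \<in> {1..N}" using 3 by auto
    have "tau (N + 1 - k) = ss ! (N - k)" using tau_int[OF k1] 3 by simp
    also have nk: "N - k = N - 1 - (k - 1)" using 3 by auto
    also have "ss ! (N - 1 - (k - 1)) = - ss ! (k - 1)" using 3 by (intro ss_sym) auto
    finally show ?thesis using tau_int 3 by simp
  qed
qed

lemma tau_inj: "inj_on tau {0..N+1}"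
proof (rule inj_onI)
  fix a b assume a: "a \<in> {0..N+1}" and b: "b \<in> {0..N+1}" and e: "tau a = tau b"
  have int: "a = b" if "a \<in> {1..N}" "b \<in> {1..N}"
  proof -
    have "ss ! (a - 1) = ss ! (b - 1)" using that e tau_int by simp
    moreover have "a - 1 < length ss" "b - 1 < length ss" using that ss_len by auto
    ultimately have "a - 1 = b - 1" using ss_distinct nth_eq_iff_index_eq by blast
    then show ?thesis using that by auto
  qed
  have ca: "a \<in> {1..N} \<or> a = 0 \<or> a = N+1" and cb: "b \<in> {1..N} \<or> b = 0 \<or> b = N+1" using a b by auto
  show "a = b"
  proof (cases "a \<in> {1..N}")
    case True
    then have ta: "-1 < tau a \<and> tau a < 1" by (rule tau_in)
    show ?thesis
    proof (cases "b \<in> {1..N}")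
      case True then show ?thesis using int \<open>a \<in> {1..N}\<close> by blast
    next
      case False then have "b = 0 \<or> b = N + 1" using cb by blast
      then have False using ta e tau_0 tau_N1 by auto
      then show ?thesis ..
    qed
  next
    case False
    then have a01: "a = 0 \<or> a = N + 1" using ca by blast
    show ?thesis
    proof (cases "b \<in> {1..N}")
      case True
      then have tb: "-1 < tau b \<and> tau b < 1" by (rule tau_in)
      then have False using a01 e tau_0 tau_N1 by auto
      then show ?thesis ..
    next
      case False then have "b = 0 \<or> b = N + 1" using cb by blast
      then show ?thesis using a01 e tau_0 tau_N1 by auto
    qed
  qed
qed


definition lp :: "nat \<Rightarrow> real poly" where
  "lp j = (\<Prod>k\<in>{0..N}-{j}. smult (1 / (tau j - tau k)) [:-tau k, 1:])"
definition gp :: "nat \<Rightarrow> real poly" where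
  "gp j = (\<Prod>k\<in>{1..N}-{j}. smult (1 / (tau j - tau k)) [:-tau k, 1:])"

lemma poly_fac: "poly (smult (1 / (a - b)) [:-b, 1:]) t = (t - b) / (a - b :: real)"
proof -
  have g: "poly (smult c [:-b, 1:]) t = c * (t - b)" for c by (simp add: algebra_simps)
  have "poly (smult (1 / (a - b)) [:-b, 1:]) t = (1 / (a - b)) * (t - b)" by (rule g)
  also have "\<dots> = (t - b) / (a - b)" by simp
  finally show ?thesis .
qed

lemma lagr_lp: "lagr N j = poly (lp j)"
  unfolding lagr_def lp_def by (rule ext) (simp only: poly_prod poly_fac)

lemma gw_I: "gauss_weight N i = I (gp i)"
proof -
  have "poly (gp i) = (\<lambda>t. \<Prod>k\<in>{1..N} - {i}. (t - tau k) / (tau i - tau k))"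
    unfolding gp_def by (rule ext) (simp only: poly_prod poly_fac)
  then show ?thesis unfolding gauss_weight_def I_def by simp
qed

lemma fac_deg: "degree (smult c [:-b, 1:]) \<le> 1"
  by (rule order.trans[OF degree_smult_le]) simp

lemma prod_fac_deg:
  assumes "finite A"
  shows "degree (\<Prod>k\<in>A. smult (c k) [:-b k, 1:]) \<le> card A"
proof -
  have "degree (\<Prod>k\<in>A. smult (c k) [:-b k, 1:]) \<le> (\<Sum>k\<in>A. degree (smult (c k) [:-b k, 1:]))"
    using degree_prod_sum_le[OF assms, of "\<lambda>k. smult (c k) [:-b k, 1:]"] by (simp only: comp_def)
  also have "\<dots> \<le> (\<Sum>k\<in>A. 1)" by (intro sum_mono fac_deg)
  finally show ?thesis by simp
qed

lemma lp_deg: "j \<in> {0..N} \<Longrightarrow> degree (lp j) \<le> N"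
proof -
  assume j: "j \<in> {0..N}"
  have "degree (lp j) \<le> card ({0..N}-{j})" unfolding lp_def by (rule prod_fac_deg) simp
  then show ?thesis using j by simp
qed

lemma gp_deg: "j \<in> {1..N} \<Longrightarrow> degree (gp j) \<le> N - 1"
proof -
  assume j: "j \<in> {1..N}"
  have "degree (gp j) \<le> card ({1..N}-{j})" unfolding gp_def by (rule prod_fac_deg) simp
  then show ?thesis using j by simp
qed

lemma prod_val:
  assumes A: "A \<subseteq> {0..N+1}" "j \<in> {0..N+1}" "k \<in> {0..N+1}" "finite A" "k \<in> A \<or> k = j" "j \<notin> A"
  shows "poly (\<Prod>m\<in>A. smult (1 / (tau j - tau m)) [:-tau m, 1:]) (tau k) = (if k = j then 1 else 0)"
proof -
  have e: "poly (\<Prod>m\<in>A. smult (1 / (tau j - tau m)) [:-tau m, 1:]) (tau k) = (\<Prod>m\<in>A. (tau k - tau m) / (tau j - tau m))"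
    by (simp only: poly_prod poly_fac)
  show ?thesis
  proof (cases "k = j")
    case True
    have "(tau j - tau m) / (tau j - tau m) = 1" if "m \<in> A" for m
    proof -
      have "m \<noteq> j" "m \<in> {0..N+1}" using that A by auto
      then have "tau j \<noteq> tau m" using tau_inj A(2) by (metis inj_on_contraD)
      then show ?thesis by simp
    qed
    then have "(\<Prod>m\<in>A. (tau k - tau m) / (tau j - tau m)) = 1" using True by (intro prod.neutral) auto
    then show ?thesis using e True by simp
  next
    case False
    then have "k \<in> A" using A by auto
    then have "(\<Prod>m\<in>A. (tau k - tau m) / (tau j - tau m)) = 0" using A(4) by (intro prod_zero) auto
    then show ?thesis using e False by simp
  qed
qed

lemma lp_val: "j \<in> {0..N} \<Longrightarrow> k \<in> {0..N} \<Longrightarrow> poly (lp j) (tau k) = (if k = j then 1 else 0)"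
  unfolding lp_def by (rule prod_val) auto

lemma gp_val: "j \<in> {1..N} \<Longrightarrow> k \<in> {1..N} \<Longrightarrow> poly (gp j) (tau k) = (if k = j then 1 else 0)"
  unfolding gp_def by (rule prod_val) auto

lemma card_tauN: "card (tau ` {1..N}) = N"
proof -
  have "inj_on tau {1..N}" by (rule inj_on_subset[OF tau_inj]) auto
  then show ?thesis by (simp add: card_image)
qed

lemma eq_on_nodes:
  assumes "degree p < N" "degree q < N" "\<And>k. k \<in> {1..N} \<Longrightarrow> poly p (tau k) = poly q (tau k)"
  shows "p = q"
  by (rule poly_eqI_degree[of "tau ` {1..N}"]) (use assms card_tauN in auto)

lemma interp: "degree r < N \<Longrightarrow> r = (\<Sum>k\<in>{1..N}. smult (poly r (tau k)) (gp k))"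
proof (rule eq_on_nodes)
  show "degree (\<Sum>k\<in>{1..N}. smult (poly r (tau k)) (gp k)) < N"
  proof -
    have "\<And>k. k \<in> {1..N} \<Longrightarrow> degree (smult (poly r (tau k)) (gp k)) \<le> N - 1"
      using gp_deg degree_smult_le order.trans by blast
    then have "degree (\<Sum>k\<in>{1..N}. smult (poly r (tau k)) (gp k)) \<le> N - 1"
      by (intro degree_sum_le) auto
    then show ?thesis using N1 by simp
  qed
  fix m assume m: "m \<in> {1..N}"
  have "poly (\<Sum>k\<in>{1..N}. smult (poly r (tau k)) (gp k)) (tau m) = (\<Sum>k\<in>{1..N}. poly r (tau k) * (if m = k then 1 else 0))"
  proof -
    have "poly (\<Sum>k\<in>{1..N}. smult (poly r (tau k)) (gp k)) (tau m) = (\<Sum>k\<in>{1..N}. poly r (tau k) * poly (gp k) (tau m))"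
      by (simp add: poly_sum)
    also have "\<dots> = (\<Sum>k\<in>{1..N}. poly r (tau k) * (if m = k then 1 else 0))"
    proof (rule sum.cong)
      fix k assume k: "k \<in> {1..N}"
      show "poly r (tau k) * poly (gp k) (tau m) = poly r (tau k) * (if m = k then 1 else 0)"
        using gp_val[OF k m] by simp
    qed simp
    finally show ?thesis .
  qed
  also have "\<dots> = (\<Sum>k\<in>{1..N}. if m = k then poly r (tau k) else 0)"
    by (rule sum.cong) auto
  also have "\<dots> = poly r (tau m)" using m by (simp add: sum.delta sum.delta')
  finally show "poly r (tau m) = poly (\<Sum>k\<in>{1..N}. smult (poly r (tau k)) (gp k)) (tau m)" by simp
qed

lemma quad:
  assumes "degree p < 2 * N"
  shows "I p = (\<Sum>k\<in>{1..N}. gauss_weight N k * poly p (tau k))"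
proof -
  define P where "P = legendre N"
  have dP: "degree P = N" "P \<noteq> 0" using leg_degree leg_nz P_def by auto
  define q where "q = p div P"
  define r where "r = p mod P"
  have pqr: "p = q * P + r" unfolding q_def r_def by simp
  have dr: "degree r < N"
    using degree_mod_less'[OF dP(2), of p] dP N1 unfolding r_def by (cases "p mod P = 0") auto
  have dq: "degree q < N"
  proof (cases "q = 0")
    case True then show ?thesis using N1 by simp
  next
    case False
    have "degree (q * P) = degree q + N" using False dP by (simp add: degree_mult_eq)
    moreover have "q * P = p - r" using pqr by simp
    moreover have "degree (p - r) < 2 * N"
      using degree_diff_le_max[of p r] assms dr by simp
    ultimately show ?thesis by simp
  qed
  have "I p = I (P * q) + I r" using pqr by (simp add: I_add mult.commute)
  also have "I (P * q) = 0" unfolding P_def by (rule leg_orth[OF dq])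
  also have "I r = (\<Sum>k\<in>{1..N}. poly r (tau k) * I (gp k))"
    by (subst interp[OF dr]) (simp add: I_sum I_smult)
  also have "\<dots> = (\<Sum>k\<in>{1..N}. gauss_weight N k * poly p (tau k))"
  proof (rule sum.cong)
    fix k assume k: "k \<in> {1..N}"
    have "poly P (tau k) = 0" using tau_ZZ[OF k] unfolding ZZ_def P_def by simp
    then have "poly p (tau k) = poly r (tau k)" using pqr by simp
    then show "poly r (tau k) * I (gp k) = gauss_weight N k * poly p (tau k)" by (simp add: gw_I)
  qed simp
  finally show ?thesis by simp
qed

lemma w_nz: "i \<in> {1..N} \<Longrightarrow> gauss_weight N i \<noteq> 0"
proof -
  assume i: "i \<in> {1..N}"
  have dg: "degree (gp i * gp i) < 2 * N"
    using degree_mult_le[of "gp i" "gp i"] gp_deg[OF i] N1 by simp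
  have "I (gp i * gp i) = (\<Sum>k\<in>{1..N}. gauss_weight N k * poly (gp i * gp i) (tau k))"
    by (rule quad[OF dg])
  also have "\<dots> = (\<Sum>k\<in>{1..N}. if k = i then gauss_weight N k else 0)"
  proof (rule sum.cong)
    fix k assume k: "k \<in> {1..N}"
    show "gauss_weight N k * poly (gp i * gp i) (tau k) = (if k = i then gauss_weight N k else 0)"
      using gp_val[OF i k] by simp
  qed simp
  also have "\<dots> = gauss_weight N i" using i by simp
  finally have e: "I (gp i * gp i) = gauss_weight N i" .
  have "gp i \<noteq> 0" using gp_val[OF i i] by auto
  then have "I (1 * gp i * gp i) \<noteq> 0" by (intro I_pos) auto
  then show ?thesis using e by simp
qed


abbreviation RR :: "real poly" where "RR \<equiv> [:0, -1:]"

lemma poly_refl: "poly (pcompose p RR) x = poly p (- x)"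
  by (simp add: poly_pcompose)

lemma deg_refl: "degree (pcompose p RR) = degree p"
  by (simp add: degree_pcompose)

lemma w_sym: "i \<in> {1..N} \<Longrightarrow> gauss_weight N (N + 1 - i) = gauss_weight N i"
proof -
  assume i: "i \<in> {1..N}"
  define i' where "i' = N + 1 - i"
  have i': "i' \<in> {1..N}" using i i'_def by auto
  have h: "pcompose (gp i) RR = gp i'"
  proof (rule eq_on_nodes)
    show "degree (pcompose (gp i) RR) < N" using gp_deg[OF i] N1 deg_refl[of "gp i"] by simp
    show "degree (gp i') < N" using gp_deg[OF i'] N1 by simp
    fix k assume k: "k \<in> {1..N}"
    have k': "N + 1 - k \<in> {1..N}" using k by auto
    have "poly (pcompose (gp i) RR) (tau k) = poly (gp i) (tau (N + 1 - k))"
      using tau_sym[of k] k by (simp add: poly_refl)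
    also have "\<dots> = (if N + 1 - k = i then 1 else 0)" using gp_val[OF i k'] by simp
    also have "\<dots> = (if k = i' then 1 else 0)" using i k i'_def by auto
    also have "\<dots> = poly (gp i') (tau k)" using gp_val[OF i' k] by simp
    finally show "poly (pcompose (gp i) RR) (tau k) = poly (gp i') (tau k)" .
  qed
  have "gauss_weight N i' = I (pcompose (gp i) RR)" using h gw_I by simp
  also have "\<dots> = integral {-1..1} (\<lambda>x. poly (gp i) (- x))"
  proof -
    have "poly (pcompose (gp i) RR) = (\<lambda>x. poly (gp i) (- x))" by (rule ext) (rule poly_refl)
    then show ?thesis unfolding I_def by simp
  qed
  also have "\<dots> = integral {-1..1} (poly (gp i))"
    using Henstock_Kurzweil_Integration.integral_reflect_real[of 1 "-1" "poly (gp i)"] by simp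
  also have "\<dots> = gauss_weight N i" using gw_I I_def by simp
  finally show ?thesis unfolding i'_def .
qed

lemma Dmat_eq: "Dmat N i j = poly (pderiv (lp j)) (tau i)"
  unfolding Dmat_def lagr_lp by (rule DERIV_imp_deriv[OF poly_DERIV])

lemma sum_delta_nodes:
  assumes "i \<in> {1..N}" "\<And>k. k \<in> {1..N} \<Longrightarrow> f k = (if k = i then c else 0)"
  shows "(\<Sum>k\<in>{1..N}. f k) = c"
proof -
  have "(\<Sum>k\<in>{1..N}. f k) = (\<Sum>k\<in>{1..N}. if k = i then c else 0)"
    by (rule sum.cong) (use assms in auto)
  also have "\<dots> = c" using assms(1) by (simp add: sum.delta)
  finally show ?thesis .
qed

lemma key:
  assumes i: "i \<in> {1..N}" and j: "j \<in> {1..N}"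
  shows "gauss_weight N i * Dmat N i j = gauss_weight N j * Dmat N (N + 1 - j) (N + 1 - i)"
proof -
  define L where "L = lp j"
  define M where "M = pcompose (lp (N + 1 - i)) RR"
  have j0: "j \<in> {0..N}" using j by auto
  have i0: "N + 1 - i \<in> {0..N}" using i by auto
  have dL: "degree L \<le> N" using lp_deg[OF j0] L_def by simp
  have dM: "degree M \<le> N" using lp_deg[OF i0] M_def deg_refl by simp
  have dL': "degree (pderiv L) \<le> N - 1" using dL by (simp add: degree_pderiv)
  have dM': "degree (pderiv M) \<le> N - 1" using dM by (simp add: degree_pderiv)
  have Lval: "poly L (tau k) = (if k = j then 1 else 0)" if "k \<in> {0..N}" for k
    using lp_val[OF j0 that] L_def by simp
  have Mval: "poly M (tau k) = (if k = i then 1 else 0)" if k: "k \<in> {1..N}" for k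
  proof -
    have k': "N + 1 - k \<in> {0..N}" using k by auto
    have "poly M (tau k) = poly (lp (N + 1 - i)) (tau (N + 1 - k))"
      using tau_sym[of k] k M_def by (simp add: poly_refl)
    also have "\<dots> = (if N + 1 - k = N + 1 - i then 1 else 0)" using lp_val[OF i0 k'] by simp
    also have "\<dots> = (if k = i then 1 else 0)" using i k by auto
    finally show ?thesis .
  qed
  have M1: "poly M 1 = 0"
  proof -
    have "poly M 1 = poly (lp (N + 1 - i)) (tau 0)" using M_def tau_0 by (simp add: poly_refl)
    also have "\<dots> = 0" using lp_val[OF i0, of 0] i by auto
    finally show ?thesis .
  qed
  have Lm1: "poly L (-1) = 0" using Lval[of 0] tau_0 j by auto
  have dM'val: "poly (pderiv M) (tau j) = - Dmat N (N + 1 - j) (N + 1 - i)"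
  proof -
    have "pderiv M = pcompose (pderiv (lp (N + 1 - i))) RR * [:-1:]"
      unfolding M_def by (simp add: pderiv_pcompose pderiv_pCons)
    then have "poly (pderiv M) (tau j) = - poly (pderiv (lp (N + 1 - i))) (- tau j)"
      by (simp add: poly_refl)
    also have "- tau j = tau (N + 1 - j)" using tau_sym[of j] j by simp
    finally show ?thesis by (simp add: Dmat_eq)
  qed
  have "I (pderiv (L * M)) = 0" unfolding I_pderiv using M1 Lm1 by simp
  moreover have "pderiv (L * M) = L * pderiv M + M * pderiv L" by (simp add: pderiv_mult)
  ultimately have sum0: "I (L * pderiv M) + I (M * pderiv L) = 0" by (simp add: I_add)
  have d1: "degree (L * pderiv M) < 2 * N"
    using degree_mult_le[of L "pderiv M"] dL dM' N1 by simp
  have d2: "degree (M * pderiv L) < 2 * N"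
    using degree_mult_le[of M "pderiv L"] dM dL' N1 by simp
  have "I (L * pderiv M) = (\<Sum>k\<in>{1..N}. gauss_weight N k * poly (L * pderiv M) (tau k))"
    by (rule quad[OF d1])
  also have "\<dots> = gauss_weight N j * poly (pderiv M) (tau j)"
    by (rule sum_delta_nodes[OF j]) (simp add: Lval)
  finally have e1: "I (L * pderiv M) = - gauss_weight N j * Dmat N (N + 1 - j) (N + 1 - i)"
    using dM'val by simp
  have "I (M * pderiv L) = (\<Sum>k\<in>{1..N}. gauss_weight N k * poly (M * pderiv L) (tau k))"
    by (rule quad[OF d2])
  also have "\<dots> = gauss_weight N i * poly (pderiv L) (tau i)"
    by (rule sum_delta_nodes[OF i]) (simp add: Mval)
  finally have e2: "I (M * pderiv L) = gauss_weight N i * Dmat N i j"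
    using Dmat_eq L_def by simp
  show ?thesis using sum0 e1 e2 by simp
qed

lemma final: "\<forall>i\<in>{1..N}. \<forall>j\<in>{1..N}. Dmat N i j = - Ddag N (N + 1 - i) (N + 1 - j)"
proof (intro ballI)
  fix i j assume i: "i \<in> {1..N}" and j: "j \<in> {1..N}"
  have wi: "gauss_weight N i \<noteq> 0" by (rule w_nz[OF i])
  have "- Ddag N (N + 1 - i) (N + 1 - j) = (gauss_weight N j / gauss_weight N i) * Dmat N (N + 1 - j) (N + 1 - i)"
    unfolding Ddag_def using w_sym[OF i] w_sym[OF j] by simp
  also have "\<dots> = Dmat N i j" using key[OF i j] wi by (simp add: field_simps)
  finally show "Dmat N i j = - Ddag N (N + 1 - i) (N + 1 - j)" by simp
qed

end


theorem proposition9p1: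
  fixes N :: nat
  assumes "N \<ge> 1"
  shows "\<forall>i\<in>{1..N}. \<forall>j\<in>{1..N}. Dmat N i j = - Ddag N (N + 1 - i) (N + 1 - j)"
  using final[OF assms] .

end
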